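(* Let $u$ be a law invariant coherent utility on $L^0$ with determining set $\mathcal{D}$ that is finite on Gaussian random variables. Let $F=(F^1,\dots,F^M)$ be a random vector with $F^m\in L^1_w(\mathcal{D})$ for all $m$, and assume $u(\langle b,F\rangle)<0$ for every $b\in\mathbb{R}^M\setminus\{0\}$. For $n\in\mathbb{N}$ let $$X_n=B_nF+\xi_n,$$ where $B_n$ is a real $n\times M$ matrix with entries $B_n^{km}$, and $\xi_n=(\xi_n^1,\dots,\xi_n^n)$ where $\xi_n^1,\dots,\xi_n^n,F$ are independent and $\xi_n^k$ is Gaussian with mean $0$ and variance $(\sigma_n^k)^2$; write $X_n=(X_n^1,\dots,X_n^n)$. Assume there exist a sequence $a_n\to\infty$ and $b=(b^1,\dots,b^M)\ne0$ such that $$a_n^{-1}\sum_{k=1}^nB_n^{km}\xrightarrow[n\to\infty]{}b^m,\quad m=1,\dots,M,\qquad a_n^{-2}\sum_{k=1}^n(\sigma_n^k)^2\xrightarrow[n\to\infty]{}0.$$ Then $$\frac{u^f\big(\sum_{k=1}^nX_n^k;F\big)}{u\big(\sum_{k=1}^nX_n^k\big)}\xrightarrow[n\to\infty]{}1.$$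
   Context: Let $(\Omega,\mathcal{F},\mathsf{P})$ be a probability space, $L^0$ the space of all real random variables, and $\mathcal{P}$ the set of probability measures on $\mathcal{F}$ absolutely continuous with respect to $\mathsf{P}$; measures $\mathsf{Q}\in\mathcal{P}$ are identified with their densities. For $\mathsf{Q}\in\mathcal{P}$ and $X\in L^0$, $\mathsf{E}_\mathsf{Q}X:=\mathsf{E}_\mathsf{Q}X^+-\mathsf{E}_\mathsf{Q}X^-$ with the convention $\infty-\infty=-\infty$. A coherent utility on $L^0$ is a map $u:L^0\to[-\infty,\infty]$ of the form $u(X)=\inf_{\mathsf{Q}\in\mathcal{D}}\mathsf{E}_\mathsf{Q}X$ for a nonempty $\mathcal{D}\subseteq\mathcal{P}$; its determining set is the largest such set, $\{\mathsf{Q}\in\mathcal{P}:\mathsf{E}_\mathsf{Q}X\ge u(X)\ \forall X\in L^0\}$. $u$ is law invariant if $u(X)=u(X')$ whenever $X,X'$ have the same distribution. $L^1_w(\mathcal{D})=\{X\in L^0:u(X)>-\infty,\ u(-X)>-\infty\}$. For a random vector $Y$, $\mathsf{E}(\mathcal{D}\mid Y):=\{\mathsf{E}(Z\mid Y):Z\in\mathcal{D}\}$ and the factor utility is $u^f(X;Y):=\inf_{\mathsf{Q}\in\mathsf{E}(\mathcal{D}\mid Y)}\mathsf{E}_\mathsf{Q}X$. *)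

theory Defs
  imports "HOL-Probability.Probability"
begin

text \<open>Densities of probability measures absolutely continuous w.r.t. the base measure M
  (the set \<open>\<P>\<close> of the paper, measures identified with their densities).\<close>
definition dens :: "'a measure \<Rightarrow> ('a \<Rightarrow> real) set" where
  "dens M = {Z. Z \<in> borel_measurable M \<and> (\<forall>\<omega>\<in>space M. 0 \<le> Z \<omega>)
                 \<and> integrable M Z \<and> integral\<^sup>L M Z = 1}"

text \<open>\<open>E_Q X = E_Q X^+ - E_Q X^-\<close>, with the convention \<open>\<infinity> - \<infinity> = -\<infinity>\<close>; Q given by density Z.\<close>
definition EQ :: "'a measure \<Rightarrow> ('a \<Rightarrow> real) \<Rightarrow> ('a \<Rightarrow> real) \<Rightarrow> ereal" where
  "EQ M Z X =
     (let p = (\<integral>\<^sup>+\<omega>. ennreal (Z \<omega> * max (X \<omega>) 0) \<partial>M);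
          n = (\<integral>\<^sup>+\<omega>. ennreal (Z \<omega> * max (- X \<omega>) 0) \<partial>M)
      in if n = \<top> then -\<infinity> else enn2ereal p - enn2ereal n)"

text \<open>Coherent utility on \<open>L^0\<close> (only its values on measurable X matter).\<close>
definition coherent_utility :: "'a measure \<Rightarrow> (('a \<Rightarrow> real) \<Rightarrow> ereal) \<Rightarrow> bool" where
  "coherent_utility M u \<longleftrightarrow>
     (\<exists>D. D \<noteq> {} \<and> D \<subseteq> dens M \<and>
        (\<forall>X\<in>borel_measurable M. u X = (INF Z\<in>D. EQ M Z X)))"

text \<open>Determining set: the largest representing set.\<close>
definition determining_set :: "'a measure \<Rightarrow> (('a \<Rightarrow> real) \<Rightarrow> ereal) \<Rightarrow> ('a \<Rightarrow> real) set" where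
  "determining_set M u = {Z \<in> dens M. \<forall>X\<in>borel_measurable M. u X \<le> EQ M Z X}"

definition law_invariant :: "'a measure \<Rightarrow> (('a \<Rightarrow> real) \<Rightarrow> ereal) \<Rightarrow> bool" where
  "law_invariant M u \<longleftrightarrow>
     (\<forall>X\<in>borel_measurable M. \<forall>X'\<in>borel_measurable M.
        distr M borel X = distr M borel X' \<longrightarrow> u X = u X')"

text \<open>X is Gaussian with mean \<open>\<mu>\<close> and variance \<open>v \<ge> 0\<close> (v = 0: degenerate, X = \<open>\<mu>\<close> a.s.).\<close>
definition gaussian :: "'a measure \<Rightarrow> ('a \<Rightarrow> real) \<Rightarrow> real \<Rightarrow> real \<Rightarrow> bool" where
  "gaussian M X \<mu> v \<longleftrightarrow> 0 \<le> v \<and> X \<in> borel_measurable M \<and>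
     (if v = 0 then distr M borel X = return borel \<mu>
      else distributed M lborel X (normal_density \<mu> (sqrt v)))"

definition finite_on_gaussians :: "'a measure \<Rightarrow> (('a \<Rightarrow> real) \<Rightarrow> ereal) \<Rightarrow> bool" where
  "finite_on_gaussians M u \<longleftrightarrow> (\<forall>X \<mu> v. gaussian M X \<mu> v \<longrightarrow> \<bar>u X\<bar> \<noteq> \<infinity>)"

definition L1w :: "'a measure \<Rightarrow> (('a \<Rightarrow> real) \<Rightarrow> ereal) \<Rightarrow> ('a \<Rightarrow> real) set" where
  "L1w M u = {X \<in> borel_measurable M. u X > -\<infinity> \<and> u (\<lambda>\<omega>. - X \<omega>) > -\<infinity>}"

definition factor_utility ::
    "'a measure \<Rightarrow> (('a \<Rightarrow> real) \<Rightarrow> ereal) \<Rightarrow> ('a \<Rightarrow> 'b::topological_space) \<Rightarrow> ('a \<Rightarrow> real) \<Rightarrow> ereal" where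
  "factor_utility M u Y X =
     (INF Z\<in>(\<lambda>Z. real_cond_exp M (vimage_algebra (space M) Y borel) Z) ` determining_set M u.
        EQ M Z X)"

end

theory Submission
  imports Defs
begin

lemma EQ_eq_integral:
  assumes Zm: "Z \<in> borel_measurable M" and Zp: "AE \<omega> in M. 0 \<le> Z \<omega>"
    and Xm: "X \<in> borel_measurable M"
    and int: "integrable M (\<lambda>\<omega>. Z \<omega> * X \<omega>)"
  shows "EQ M Z X = ereal (\<integral>\<omega>. Z \<omega> * X \<omega> \<partial>M)"
proof -
  have ip: "integrable M (\<lambda>\<omega>. Z \<omega> * max (X \<omega>) 0)"
  proof (rule Bochner_Integration.integrable_bound[OF int])
    show "(\<lambda>\<omega>. Z \<omega> * max (X \<omega>) 0) \<in> borel_measurable M" using Zm Xm by measurable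
    show "AE \<omega> in M. norm (Z \<omega> * max (X \<omega>) 0) \<le> norm (Z \<omega> * X \<omega>)"
      using Zp
    proof eventually_elim
      case (elim \<omega>)
      then show ?case by (simp add: abs_mult mult_left_mono)
    qed
  qed
  have im: "integrable M (\<lambda>\<omega>. Z \<omega> * max (- X \<omega>) 0)"
  proof (rule Bochner_Integration.integrable_bound[OF int])
    show "(\<lambda>\<omega>. Z \<omega> * max (- X \<omega>) 0) \<in> borel_measurable M" using Zm Xm by measurable
    show "AE \<omega> in M. norm (Z \<omega> * max (- X \<omega>) 0) \<le> norm (Z \<omega> * X \<omega>)"
      using Zp
    proof eventually_elim
      case (elim \<omega>)
      then show ?case by (simp add: abs_mult mult_left_mono)
    qed
  qed
  have p: "(\<integral>\<^sup>+\<omega>. ennreal (Z \<omega> * max (X \<omega>) 0) \<partial>M) = ennreal (\<integral>\<omega>. Z \<omega> * max (X \<omega>) 0 \<partial>M)"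
    by (rule nn_integral_eq_integral[OF ip]) (use Zp in \<open>eventually_elim, simp\<close>)
  have n: "(\<integral>\<^sup>+\<omega>. ennreal (Z \<omega> * max (- X \<omega>) 0) \<partial>M) = ennreal (\<integral>\<omega>. Z \<omega> * max (- X \<omega>) 0 \<partial>M)"
    by (rule nn_integral_eq_integral[OF im]) (use Zp in \<open>eventually_elim, simp\<close>)
  have mm: "\<And>x::real. max x 0 - max (- x) 0 = x" by (simp add: max_def)
  have split: "(\<integral>\<omega>. Z \<omega> * X \<omega> \<partial>M) = (\<integral>\<omega>. Z \<omega> * max (X \<omega>) 0 \<partial>M) - (\<integral>\<omega>. Z \<omega> * max (- X \<omega>) 0 \<partial>M)"
    by (subst Bochner_Integration.integral_diff[symmetric, OF ip im])
       (rule Bochner_Integration.integral_cong, simp_all add: right_diff_distrib[symmetric] mm)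
  have p0: "0 \<le> (\<integral>\<omega>. Z \<omega> * max (X \<omega>) 0 \<partial>M)"
    by (rule integral_nonneg_AE) (use Zp in \<open>eventually_elim, simp\<close>)
  have n0: "0 \<le> (\<integral>\<omega>. Z \<omega> * max (- X \<omega>) 0 \<partial>M)"
    by (rule integral_nonneg_AE) (use Zp in \<open>eventually_elim, simp\<close>)
  have "EQ M Z X = enn2ereal (ennreal (\<integral>\<omega>. Z \<omega> * max (X \<omega>) 0 \<partial>M)) - enn2ereal (ennreal (\<integral>\<omega>. Z \<omega> * max (- X \<omega>) 0 \<partial>M))"
    unfolding EQ_def Let_def p n by simp
  also have "\<dots> = ereal (\<integral>\<omega>. Z \<omega> * X \<omega> \<partial>M)"
    unfolding split using p0 n0 by simp
  finally show ?thesis .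
qed

lemma EQ_fin:
  assumes "EQ M Z X \<noteq> -\<infinity>"
  shows "(\<integral>\<^sup>+\<omega>. ennreal (Z \<omega> * max (- X \<omega>) 0) \<partial>M) \<noteq> \<top>"
proof
  assume "(\<integral>\<^sup>+\<omega>. ennreal (Z \<omega> * max (- X \<omega>) 0) \<partial>M) = \<top>"
  then have "EQ M Z X = -\<infinity>" unfolding EQ_def Let_def by simp
  with assms show False by simp
qed

lemma integrable_of_EQ:
  assumes Z: "Z \<in> dens M" and Xm: "X \<in> borel_measurable M"
    and e1: "EQ M Z X \<noteq> -\<infinity>" and e2: "EQ M Z (\<lambda>\<omega>. - X \<omega>) \<noteq> -\<infinity>"
  shows "integrable M (\<lambda>\<omega>. Z \<omega> * X \<omega>)"
proof -
  have Zm: "Z \<in> borel_measurable M" and Zp: "\<And>\<omega>. \<omega> \<in> space M \<Longrightarrow> 0 \<le> Z \<omega>"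
    using Z by (auto simp: dens_def)
  have n1: "(\<integral>\<^sup>+\<omega>. ennreal (Z \<omega> * max (- X \<omega>) 0) \<partial>M) \<noteq> \<top>"
    by (rule EQ_fin[OF e1])
  have n2: "(\<integral>\<^sup>+\<omega>. ennreal (Z \<omega> * max (X \<omega>) 0) \<partial>M) \<noteq> \<top>"
    using EQ_fin[OF e2] by simp
  have "(\<integral>\<^sup>+\<omega>. ennreal (norm (Z \<omega> * X \<omega>)) \<partial>M) =
        (\<integral>\<^sup>+\<omega>. ennreal (Z \<omega> * max (X \<omega>) 0) + ennreal (Z \<omega> * max (- X \<omega>) 0) \<partial>M)"
  proof (rule nn_integral_cong)
    fix \<omega> assume "\<omega> \<in> space M"
    then have z: "0 \<le> Z \<omega>" by (rule Zp)
    have a1: "0 \<le> Z \<omega> * max (X \<omega>) 0" and a2: "0 \<le> Z \<omega> * max (- X \<omega>) 0" using z by auto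
    have "norm (Z \<omega> * X \<omega>) = Z \<omega> * max (X \<omega>) 0 + Z \<omega> * max (- X \<omega>) 0"
    proof (cases "0 \<le> X \<omega>")
      case True then show ?thesis using z by (simp add: abs_mult max_def)
    next
      case False then show ?thesis using z by (simp add: abs_mult max_def)
    qed
    then show "ennreal (norm (Z \<omega> * X \<omega>)) = ennreal (Z \<omega> * max (X \<omega>) 0) + ennreal (Z \<omega> * max (- X \<omega>) 0)"
      using ennreal_plus[OF a1 a2] by simp
  qed
  also have "\<dots> = (\<integral>\<^sup>+\<omega>. ennreal (Z \<omega> * max (X \<omega>) 0) \<partial>M) + (\<integral>\<^sup>+\<omega>. ennreal (Z \<omega> * max (- X \<omega>) 0) \<partial>M)"
    by (rule nn_integral_add) (use Zm Xm in measurable)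
  also have "\<dots> < \<infinity>" using n1 n2 by (simp add: less_top)
  finally have fin: "(\<integral>\<^sup>+\<omega>. ennreal (norm (Z \<omega> * X \<omega>)) \<partial>M) < \<infinity>" .
  show ?thesis
    by (rule integrableI_bounded[OF _ fin]) (use Zm Xm in measurable)
qed

lemma dens_AE_nonneg: "Z \<in> dens M \<Longrightarrow> AE \<omega> in M. 0 \<le> Z \<omega>"
  by (auto simp: dens_def intro!: AE_I2)

lemma det_set_props:
  assumes "coherent_utility M u"
  shows "determining_set M u \<noteq> {}" "determining_set M u \<subseteq> dens M"
    "\<And>X. X \<in> borel_measurable M \<Longrightarrow> u X = (INF Z\<in>determining_set M u. EQ M Z X)"
proof -
  obtain D0 where D0: "D0 \<noteq> {}" "D0 \<subseteq> dens M" "\<forall>X\<in>borel_measurable M. u X = (INF Z\<in>D0. EQ M Z X)"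
    using assms unfolding coherent_utility_def by blast
  have sub: "D0 \<subseteq> determining_set M u"
    unfolding determining_set_def using D0 by (auto intro: INF_lower)
  then show "determining_set M u \<noteq> {}" using D0 by auto
  show "determining_set M u \<subseteq> dens M" by (auto simp: determining_set_def)
  fix X :: "'a \<Rightarrow> real" assume X: "X \<in> borel_measurable M"
  have "(INF Z\<in>determining_set M u. EQ M Z X) \<le> (INF Z\<in>D0. EQ M Z X)"
    by (rule INF_superset_mono[OF sub]) simp
  also have "\<dots> = u X" using D0 X by auto
  finally show "u X = (INF Z\<in>determining_set M u. EQ M Z X)"
    using X by (auto simp: determining_set_def intro!: antisym INF_greatest)
qed

lemma L1w_bounds:
  assumes X: "X \<in> borel_measurable M" and u1: "u X \<noteq> -\<infinity>" and u2: "u (\<lambda>\<omega>. - X \<omega>) \<noteq> -\<infinity>"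
    and Z: "Z \<in> determining_set M u"
  shows "integrable M (\<lambda>\<omega>. Z \<omega> * X \<omega>)" "u X \<le> ereal (\<integral>\<omega>. Z \<omega> * X \<omega> \<partial>M)"
    "u (\<lambda>\<omega>. - X \<omega>) \<le> ereal (- (\<integral>\<omega>. Z \<omega> * X \<omega> \<partial>M))"
proof -
  have Zd: "Z \<in> dens M" and le1: "u X \<le> EQ M Z X" and le2: "u (\<lambda>\<omega>. - X \<omega>) \<le> EQ M Z (\<lambda>\<omega>. - X \<omega>)"
    using Z X by (auto simp: determining_set_def)
  have Zm: "Z \<in> borel_measurable M" using Zd by (auto simp: dens_def)
  have "EQ M Z X \<noteq> -\<infinity>" using le1 u1 by auto
  moreover have "EQ M Z (\<lambda>\<omega>. - X \<omega>) \<noteq> -\<infinity>" using le2 u2 by auto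
  ultimately show int: "integrable M (\<lambda>\<omega>. Z \<omega> * X \<omega>)"
    by (rule integrable_of_EQ[OF Zd X])
  show "u X \<le> ereal (\<integral>\<omega>. Z \<omega> * X \<omega> \<partial>M)"
    using le1 EQ_eq_integral[OF Zm dens_AE_nonneg[OF Zd] X int] by simp
  have int2: "integrable M (\<lambda>\<omega>. Z \<omega> * - X \<omega>)" using int by simp
  have "EQ M Z (\<lambda>\<omega>. - X \<omega>) = ereal (\<integral>\<omega>. Z \<omega> * - X \<omega> \<partial>M)"
    by (rule EQ_eq_integral[OF Zm dens_AE_nonneg[OF Zd] _ int2]) (use X in simp)
  then show "u (\<lambda>\<omega>. - X \<omega>) \<le> ereal (- (\<integral>\<omega>. Z \<omega> * X \<omega> \<partial>M))"
    using le2 by simp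
qed

lemma INF_ereal_real:
  fixes h :: "'z \<Rightarrow> real"
  assumes "D \<noteq> {}" "\<And>Z. Z \<in> D \<Longrightarrow> Bd \<le> h Z"
  shows "(INF Z\<in>D. ereal (h Z)) = ereal (Inf (h ` D))"
proof -
  have "bdd_below (h ` D)" using assms(2) by (intro bdd_belowI2) auto
  then have "ereal (Inf (h ` D)) = (INF x\<in>h ` D. ereal x)"
    using assms(1) by (intro ereal_Inf') auto
  then show ?thesis by (simp add: image_comp)
qed

lemma Inf_perturb:
  fixes h1 h2 :: "'z \<Rightarrow> real"
  assumes D: "D \<noteq> {}" and b1: "\<And>Z. Z \<in> D \<Longrightarrow> Bd \<le> h1 Z" and b2: "\<And>Z. Z \<in> D \<Longrightarrow> Bd \<le> h2 Z"
    and d: "\<And>Z. Z \<in> D \<Longrightarrow> \<bar>h1 Z - h2 Z\<bar> \<le> \<delta>"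
  shows "\<bar>Inf (h1 ` D) - Inf (h2 ` D)\<bar> \<le> \<delta>"
proof -
  have bb1: "bdd_below (h1 ` D)" using b1 by (intro bdd_belowI2) auto
  have bb2: "bdd_below (h2 ` D)" using b2 by (intro bdd_belowI2) auto
  have "Inf (h2 ` D) - \<delta> \<le> Inf (h1 ` D)"
  proof -
    have "Inf (h2 ` D) - \<delta> \<le> h1 Z" if "Z \<in> D" for Z
    proof -
      have "Inf (h2 ` D) \<le> h2 Z" using bb2 that by (intro cInf_lower) auto
      then show ?thesis using d[OF that] by linarith
    qed
    then show ?thesis using D by (intro cInf_greatest) auto
  qed
  moreover have "Inf (h1 ` D) - \<delta> \<le> Inf (h2 ` D)"
  proof -
    have "Inf (h1 ` D) - \<delta> \<le> h2 Z" if "Z \<in> D" for Z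
    proof -
      have "Inf (h1 ` D) \<le> h1 Z" using bb1 that by (intro cInf_lower) auto
      then show ?thesis using d[OF that] by linarith
    qed
    then show ?thesis using D by (intro cInf_greatest) auto
  qed
  ultimately show ?thesis by linarith
qed

lemma Inf_scale:
  fixes h :: "'z \<Rightarrow> real"
  assumes D: "D \<noteq> {}" and b: "\<And>Z. Z \<in> D \<Longrightarrow> Bd \<le> h Z" and a: "0 < a"
  shows "Inf ((\<lambda>Z. a * h Z) ` D) = a * Inf (h ` D)"
proof -
  have bb: "bdd_below (h ` D)" using b by (intro bdd_belowI2) auto
  have bb': "bdd_below ((\<lambda>Z. a * h Z) ` D)"
    using b a by (intro bdd_belowI2[where m="a * Bd"]) auto
  have "a * Inf (h ` D) \<le> Inf ((\<lambda>Z. a * h Z) ` D)"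
  proof (rule cInf_greatest)
    show "(\<lambda>Z. a * h Z) ` D \<noteq> {}" using D by auto
    fix x assume "x \<in> (\<lambda>Z. a * h Z) ` D"
    then obtain Z where "Z \<in> D" "x = a * h Z" by auto
    moreover have "Inf (h ` D) \<le> h Z" using bb \<open>Z \<in> D\<close> by (intro cInf_lower) auto
    ultimately show "a * Inf (h ` D) \<le> x" using a by simp
  qed
  moreover have "Inf ((\<lambda>Z. a * h Z) ` D) / a \<le> Inf (h ` D)"
  proof (rule cInf_greatest)
    show "h ` D \<noteq> {}" using D by auto
    fix x assume "x \<in> h ` D"
    then obtain Z where "Z \<in> D" "x = h Z" by auto
    moreover have "Inf ((\<lambda>Z. a * h Z) ` D) \<le> a * h Z" using bb' \<open>Z \<in> D\<close> by (intro cInf_lower) auto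
    ultimately show "Inf ((\<lambda>Z. a * h Z) ` D) / a \<le> x" using a by (simp add: divide_le_eq mult.commute)
  qed
  then have "Inf ((\<lambda>Z. a * h Z) ` D) \<le> a * Inf (h ` D)" using a by (simp add: divide_le_eq mult.commute)
  ultimately show ?thesis by linarith
qed

lemma analytic_part:
  fixes D :: "'z set" and e :: "'z \<Rightarrow> 'm::finite \<Rightarrow> real" and g :: "'z \<Rightarrow> nat \<Rightarrow> real"
    and c :: "nat \<Rightarrow> real^'m" and a s :: "nat \<Rightarrow> real" and b :: "real^'m" and L :: "'m \<Rightarrow> real"
    and K :: real
  assumes D: "D \<noteq> {}"
    and eb: "\<And>Z m. Z \<in> D \<Longrightarrow> \<bar>e Z m\<bar> \<le> L m"
    and gb: "\<And>Z n. Z \<in> D \<Longrightarrow> \<bar>g Z n\<bar> \<le> K * s n"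
    and neg: "(INF Z\<in>D. ereal (\<Sum>m\<in>UNIV. b $ m * e Z m)) < 0"
    and a: "filterlim a at_top sequentially"
    and cl: "\<And>m. (\<lambda>n. c n $ m / a n) \<longlonglongrightarrow> b $ m"
    and sl: "(\<lambda>n. s n / a n) \<longlonglongrightarrow> 0"
  shows "(\<lambda>n. (INF Z\<in>D. ereal (\<Sum>m\<in>UNIV. c n $ m * e Z m)) /
              (INF Z\<in>D. ereal ((\<Sum>m\<in>UNIV. c n $ m * e Z m) + g Z n))) \<longlonglongrightarrow> (1::ereal)"
proof -
  define hb where "hb Z = (\<Sum>m\<in>UNIV. b $ m * e Z m)" for Z
  define p where "p n Z = (\<Sum>m\<in>UNIV. c n $ m * e Z m)" for n Z
  define q where "q n Z = p n Z + g Z n" for n Z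
  define \<phi> where "\<phi> = Inf (hb ` D)"
  define A where "A n = Inf (p n ` D)" for n
  define C where "C n = Inf (q n ` D)" for n
  define d where "d n = (\<Sum>m\<in>UNIV. \<bar>c n $ m / a n - b $ m\<bar> * L m)" for n
  have L0: "0 \<le> L m" for m using D eb by (meson abs_ge_zero all_not_in_conv order_trans)
  have sum_bound: "\<bar>\<Sum>m\<in>UNIV. v $ m * e Z m\<bar> \<le> (\<Sum>m\<in>UNIV. \<bar>v $ m\<bar> * L m)" if "Z \<in> D" for v Z
  proof -
    have "\<bar>\<Sum>m\<in>UNIV. v $ m * e Z m\<bar> \<le> (\<Sum>m\<in>UNIV. \<bar>v $ m * e Z m\<bar>)" by (rule sum_abs)
    also have "\<dots> \<le> (\<Sum>m\<in>UNIV. \<bar>v $ m\<bar> * L m)"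
      by (intro sum_mono) (auto simp: abs_mult intro: mult_left_mono eb[OF that])
    finally show ?thesis .
  qed
  have lb_sum: "- (\<Sum>m\<in>UNIV. \<bar>v $ m\<bar> * L m) \<le> (\<Sum>m\<in>UNIV. v $ m * e Z m)" if "Z \<in> D" for v Z
    using sum_bound[OF that, of v] by linarith
  have hb_lb: "\<And>Z. Z \<in> D \<Longrightarrow> - (\<Sum>m\<in>UNIV. \<bar>b $ m\<bar> * L m) \<le> hb Z"
    unfolding hb_def by (rule lb_sum)
  have p_lb: "\<And>Z. Z \<in> D \<Longrightarrow> - (\<Sum>m\<in>UNIV. \<bar>c n $ m\<bar> * L m) \<le> p n Z" for n
    unfolding p_def by (rule lb_sum)
  have q_lb: "\<And>Z. Z \<in> D \<Longrightarrow> - (\<Sum>m\<in>UNIV. \<bar>c n $ m\<bar> * L m) - \<bar>K * s n\<bar> \<le> q n Z" for n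
  proof -
    fix Z assume Z: "Z \<in> D"
    have "\<bar>g Z n\<bar> \<le> \<bar>K * s n\<bar>" using gb[OF Z, of n] by linarith
    then show "- (\<Sum>m\<in>UNIV. \<bar>c n $ m\<bar> * L m) - \<bar>K * s n\<bar> \<le> q n Z"
      using p_lb[OF Z, of n] unfolding q_def by linarith
  qed
  have phi_neg: "\<phi> < 0"
    using neg INF_ereal_real[OF D hb_lb] unfolding hb_def[symmetric] \<phi>_def by simp
  have d0: "d \<longlonglongrightarrow> 0"
  proof -
    have "(\<lambda>n. d n) \<longlonglongrightarrow> (\<Sum>m\<in>UNIV. \<bar>b $ m - b $ m\<bar> * L m)"
      unfolding d_def by (intro tendsto_intros cl)
    then show ?thesis by simp
  qed
  have apos: "eventually (\<lambda>n. 0 < a n) sequentially"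
    using a by (simp add: filterlim_at_top_dense)
  have estA: "eventually (\<lambda>n. \<bar>A n / a n - \<phi>\<bar> \<le> d n) sequentially"
    using apos
  proof eventually_elim
    case (elim n)
    have "\<bar>A n - Inf ((\<lambda>Z. a n * hb Z) ` D)\<bar> \<le> a n * d n"
      unfolding A_def
    proof (rule Inf_perturb[OF D])
      fix Z assume Z: "Z \<in> D"
      show "- (\<Sum>m\<in>UNIV. \<bar>c n $ m\<bar> * L m) - a n * (\<Sum>m\<in>UNIV. \<bar>b $ m\<bar> * L m) \<le> p n Z"
      proof -
        have "0 \<le> (\<Sum>m\<in>UNIV. \<bar>b $ m\<bar> * L m)" using L0 by (intro sum_nonneg) simp
        then have "0 \<le> a n * (\<Sum>m\<in>UNIV. \<bar>b $ m\<bar> * L m)" using elim by simp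
        then show ?thesis using p_lb[OF Z, of n] by linarith
      qed
      show "- (\<Sum>m\<in>UNIV. \<bar>c n $ m\<bar> * L m) - a n * (\<Sum>m\<in>UNIV. \<bar>b $ m\<bar> * L m) \<le> a n * hb Z"
      proof -
        have "0 \<le> (\<Sum>m\<in>UNIV. \<bar>c n $ m\<bar> * L m)" using L0 by (intro sum_nonneg) simp
        moreover have "a n * (- (\<Sum>m\<in>UNIV. \<bar>b $ m\<bar> * L m)) \<le> a n * hb Z"
          using hb_lb[OF Z] elim by (intro mult_left_mono) auto
        ultimately show ?thesis by simp
      qed
      have "p n Z - a n * hb Z = (\<Sum>m\<in>UNIV. (c n - a n *\<^sub>R b) $ m * e Z m)"
        unfolding p_def hb_def by (simp add: sum_subtractf sum_distrib_left algebra_simps)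
      also have "\<bar>\<dots>\<bar> \<le> (\<Sum>m\<in>UNIV. \<bar>(c n - a n *\<^sub>R b) $ m\<bar> * L m)" by (rule sum_bound[OF Z])
      also have "\<dots> = a n * d n"
        unfolding d_def sum_distrib_left
      proof (rule sum.cong)
        fix m
        have "\<bar>(c n - a n *\<^sub>R b) $ m\<bar> = a n * \<bar>c n $ m / a n - b $ m\<bar>"
          using elim by (simp add: abs_mult[symmetric] field_simps)
        then show "\<bar>(c n - a n *\<^sub>R b) $ m\<bar> * L m = a n * (\<bar>c n $ m / a n - b $ m\<bar> * L m)" by simp
      qed simp
      finally show "\<bar>p n Z - a n * hb Z\<bar> \<le> a n * d n" .
    qed
    moreover have "Inf ((\<lambda>Z. a n * hb Z) ` D) = a n * \<phi>"
      unfolding \<phi>_def by (rule Inf_scale[OF D hb_lb elim])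
    ultimately have "\<bar>A n - a n * \<phi>\<bar> \<le> a n * d n" by simp
    then have "\<bar>(A n - a n * \<phi>) / a n\<bar> \<le> d n" using elim by (simp add: divide_le_eq mult.commute)
    moreover have "(A n - a n * \<phi>) / a n = A n / a n - \<phi>" using elim by (simp add: field_simps)
    ultimately show ?case by simp
  qed
  have pw: "\<bar>p n Z - a n * hb Z\<bar> \<le> a n * d n" if Z: "Z \<in> D" and an: "0 < a n" for n Z
  proof -
      have "p n Z - a n * hb Z = (\<Sum>m\<in>UNIV. (c n - a n *\<^sub>R b) $ m * e Z m)"
        unfolding p_def hb_def by (simp add: sum_subtractf sum_distrib_left algebra_simps)
      also have "\<bar>\<dots>\<bar> \<le> (\<Sum>m\<in>UNIV. \<bar>(c n - a n *\<^sub>R b) $ m\<bar> * L m)" by (rule sum_bound[OF Z])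
      also have "\<dots> = a n * d n"
        unfolding d_def sum_distrib_left
      proof (rule sum.cong)
        fix m
        have "\<bar>(c n - a n *\<^sub>R b) $ m\<bar> = a n * \<bar>c n $ m / a n - b $ m\<bar>"
          using an by (simp add: abs_mult[symmetric] field_simps)
        then show "\<bar>(c n - a n *\<^sub>R b) $ m\<bar> * L m = a n * (\<bar>c n $ m / a n - b $ m\<bar> * L m)" by simp
      qed simp
      finally show "\<bar>p n Z - a n * hb Z\<bar> \<le> a n * d n" .
  qed
  have estC: "eventually (\<lambda>n. \<bar>C n / a n - \<phi>\<bar> \<le> d n + \<bar>K\<bar> * \<bar>s n / a n\<bar>) sequentially"
    using apos
  proof eventually_elim
    case (elim n)
    have S1: "0 \<le> (\<Sum>m\<in>UNIV. \<bar>b $ m\<bar> * L m)" using L0 by (intro sum_nonneg) simp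
    have S2: "0 \<le> (\<Sum>m\<in>UNIV. \<bar>c n $ m\<bar> * L m)" using L0 by (intro sum_nonneg) simp
    have "\<bar>C n - Inf ((\<lambda>Z. a n * hb Z) ` D)\<bar> \<le> a n * d n + \<bar>K * s n\<bar>"
      unfolding C_def
    proof (rule Inf_perturb[OF D])
      fix Z assume Z: "Z \<in> D"
      show "- (\<Sum>m\<in>UNIV. \<bar>c n $ m\<bar> * L m) - a n * (\<Sum>m\<in>UNIV. \<bar>b $ m\<bar> * L m) - \<bar>K * s n\<bar> \<le> q n Z"
      proof -
        have "0 \<le> a n * (\<Sum>m\<in>UNIV. \<bar>b $ m\<bar> * L m)" using elim S1 by simp
        then show ?thesis using q_lb[OF Z, of n] by linarith
      qed
      show "- (\<Sum>m\<in>UNIV. \<bar>c n $ m\<bar> * L m) - a n * (\<Sum>m\<in>UNIV. \<bar>b $ m\<bar> * L m) - \<bar>K * s n\<bar> \<le> a n * hb Z"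
      proof -
        have "a n * (- (\<Sum>m\<in>UNIV. \<bar>b $ m\<bar> * L m)) \<le> a n * hb Z"
          using hb_lb[OF Z] elim by (intro mult_left_mono) auto
        then show ?thesis using S2 by simp
      qed
      have "\<bar>g Z n\<bar> \<le> \<bar>K * s n\<bar>" using gb[OF Z, of n] by linarith
      then show "\<bar>q n Z - a n * hb Z\<bar> \<le> a n * d n + \<bar>K * s n\<bar>"
        using pw[OF Z elim] unfolding q_def by linarith
    qed
    moreover have "Inf ((\<lambda>Z. a n * hb Z) ` D) = a n * \<phi>"
      unfolding \<phi>_def by (rule Inf_scale[OF D hb_lb elim])
    ultimately have "\<bar>C n - a n * \<phi>\<bar> \<le> a n * d n + \<bar>K * s n\<bar>" by simp
    then have "\<bar>(C n - a n * \<phi>) / a n\<bar> \<le> (a n * d n + \<bar>K * s n\<bar>) / a n"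
      using elim by (simp add: divide_right_mono)
    moreover have "(C n - a n * \<phi>) / a n = C n / a n - \<phi>" using elim by (simp add: field_simps)
    moreover have "(a n * d n + \<bar>K * s n\<bar>) / a n = d n + \<bar>K\<bar> * \<bar>s n / a n\<bar>"
      using elim by (simp add: field_simps abs_mult)
    ultimately show ?case by simp
  qed
  have limA: "(\<lambda>n. A n / a n) \<longlonglongrightarrow> \<phi>"
  proof -
    have "(\<lambda>n. A n / a n - \<phi>) \<longlonglongrightarrow> 0"
      by (rule Lim_null_comparison[OF _ d0]) (use estA in auto)
    then show ?thesis by (rule LIM_zero_cancel)
  qed
  have limC: "(\<lambda>n. C n / a n) \<longlonglongrightarrow> \<phi>"
  proof -
    have z: "(\<lambda>n. d n + \<bar>K\<bar> * \<bar>s n / a n\<bar>) \<longlonglongrightarrow> 0 + \<bar>K\<bar> * \<bar>0\<bar>"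
      by (intro tendsto_intros d0 sl)
    have "(\<lambda>n. C n / a n - \<phi>) \<longlonglongrightarrow> 0"
      by (rule Lim_null_comparison[OF _ z[simplified]]) (use estC in auto)
    then show ?thesis by (rule LIM_zero_cancel)
  qed
  have "(\<lambda>n. (A n / a n) / (C n / a n)) \<longlonglongrightarrow> \<phi> / \<phi>"
    using phi_neg by (intro tendsto_divide limA limC) auto
  then have lim1: "(\<lambda>n. (A n / a n) / (C n / a n)) \<longlonglongrightarrow> 1" using phi_neg by simp
  have Cneg: "eventually (\<lambda>n. C n / a n < 0) sequentially"
    using limC phi_neg by (rule order_tendstoD)
  have ev: "eventually (\<lambda>n. ereal ((A n / a n) / (C n / a n)) =
     (INF Z\<in>D. ereal (\<Sum>m\<in>UNIV. c n $ m * e Z m)) /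
              (INF Z\<in>D. ereal ((\<Sum>m\<in>UNIV. c n $ m * e Z m) + g Z n))) sequentially"
    using apos Cneg
  proof eventually_elim
    case (elim n)
    have "(INF Z\<in>D. ereal (\<Sum>m\<in>UNIV. c n $ m * e Z m)) = ereal (A n)"
      unfolding A_def p_def[symmetric] by (rule INF_ereal_real[OF D p_lb])
    moreover have "(INF Z\<in>D. ereal ((\<Sum>m\<in>UNIV. c n $ m * e Z m) + g Z n)) = ereal (C n)"
    proof -
      have "(INF Z\<in>D. ereal (q n Z)) = ereal (Inf (q n ` D))"
        by (rule INF_ereal_real[OF D, where Bd="- (\<Sum>m\<in>UNIV. \<bar>c n $ m\<bar> * L m) - \<bar>K * s n\<bar>"]) (rule q_lb)
      then show ?thesis by (simp add: C_def q_def p_def)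
    qed
    moreover have "C n \<noteq> 0" using elim by auto
    moreover have "(A n / a n) / (C n / a n) = A n / C n" using elim by simp
    ultimately show ?case by (simp add: ereal_divide)
  qed
  have "(\<lambda>n. ereal ((A n / a n) / (C n / a n))) \<longlonglongrightarrow> ereal 1"
    by (rule tendsto_ereal[OF lim1])
  then show ?thesis
    using ev by (simp add: tendsto_cong one_ereal_def[symmetric])
qed

lemma (in prob_space) indep_sets_Some:
  assumes H: "indep_sets F (Some ` I)"
  shows "indep_sets (\<lambda>i. F (Some i)) I"
proof (rule indep_setsI)
  fix i assume "i \<in> I" then show "F (Some i) \<subseteq> events"
    using H by (auto simp: indep_sets_def)
next
  fix A J assume J: "J \<noteq> {}" "J \<subseteq> I" "finite J" and A: "\<forall>j\<in>J. A j \<in> F (Some j)"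
  have "prob (\<Inter>j\<in>Some ` J. A (the j)) = (\<Prod>j\<in>Some ` J. prob (A (the j)))"
    by (rule indep_setsD[OF H]) (use J A in auto)
  moreover have "(\<Inter>j\<in>Some ` J. A (the j)) = (\<Inter>j\<in>J. A j)" by auto
  moreover have "(\<Prod>j\<in>Some ` J. prob (A (the j))) = (\<Prod>j\<in>J. prob (A j))"
    by (subst prod.reindex) (auto simp: inj_on_def)
  ultimately show "prob (\<Inter>j\<in>J. A j) = (\<Prod>j\<in>J. prob (A j))" by simp
qed

lemma (in prob_space) indep_var_from_family:
  assumes H: "indep_sets (\<lambda>i. case i of None \<Rightarrow> sets G | Some k \<Rightarrow> sets (vimage_algebra (space M) (Y k) borel))
                (insert None (Some ` I))"
    and k: "k \<in> I" and XG: "X \<in> borel_measurable G" and XM: "X \<in> borel_measurable M"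
    and YM: "Y k \<in> borel_measurable M" and spG: "space G = space M"
  shows "indep_var borel X borel (Y k)"
proof -
  have evG: "sets G \<subseteq> events" using H by (auto simp: indep_sets_def)
  have sub: "sigma_sets (space M) {X -` A \<inter> space M | A. A \<in> sets borel} \<subseteq> sets G"
  proof (rule sigma_algebra.sigma_sets_subset)
    show "sigma_algebra (space M) (sets G)" using spG by (metis sets.sigma_algebra_axioms)
    show "{X -` A \<inter> space M |A. A \<in> sets borel} \<subseteq> sets G"
      using XG spG by (auto simp: measurable_def)
  qed
  show ?thesis
    unfolding indep_var_eq
  proof (intro conjI XM YM)
    show "indep_set (sigma_sets (space M) {X -` A \<inter> space M |A. A \<in> sets borel})
       (sigma_sets (space M) {Y k -` A \<inter> space M |A. A \<in> sets borel})"
    proof (rule indep_setI)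
      show "sigma_sets (space M) {X -` A \<inter> space M |A. A \<in> sets borel} \<subseteq> events"
        using sub evG by auto
      show "sigma_sets (space M) {Y k -` A \<inter> space M |A. A \<in> sets borel} \<subseteq> events"
        using H k by (auto simp: indep_sets_def sets_vimage_algebra)
      fix a b assume a: "a \<in> sigma_sets (space M) {X -` A \<inter> space M |A. A \<in> sets borel}"
        and b: "b \<in> sigma_sets (space M) {Y k -` A \<inter> space M |A. A \<in> sets borel}"
      have "prob (\<Inter>j\<in>{None, Some k}. (\<lambda>j. if j = None then a else b) j) =
            (\<Prod>j\<in>{None, Some k}. prob ((\<lambda>j. if j = None then a else b) j))"
        by (rule indep_setsD[OF H]) (use k a b sub in \<open>auto simp: sets_vimage_algebra\<close>)
      then show "prob (a \<inter> b) = prob a * prob b" by (simp add: Int_commute)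
    qed
  qed
qed

lemma (in prob_space) gaussian_deg_AE:
  assumes "gaussian M X \<mu> 0"
  shows "AE \<omega> in M. X \<omega> = \<mu>"
proof -
  have Xm: "X \<in> borel_measurable M" and d: "distr M borel X = return borel \<mu>"
    using assms by (auto simp: gaussian_def)
  have "AE x in distr M borel X. x = \<mu>"
    unfolding d by (subst AE_return) auto
  then show ?thesis by (rule AE_distrD[OF Xm])
qed

lemma (in prob_space) gaussian_int:
  assumes "gaussian M X 0 v"
  shows "integrable M X" "expectation X = 0"
proof -
  have Xm: "X \<in> borel_measurable M" and v: "0 \<le> v" using assms by (auto simp: gaussian_def)
  have "integrable M X \<and> expectation X = 0"
  proof (cases "v = 0")
    case True
    then have ae: "AE \<omega> in M. X \<omega> = 0" using assms gaussian_deg_AE by simp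
    have "integrable M X" by (rule integrable_cong_AE[THEN iffD2, OF Xm _ ae]) auto
    moreover have "expectation X = 0" using integral_cong_AE[OF Xm _ ae] by simp
    ultimately show ?thesis by simp
  next
    case False
    then have d: "distributed M lborel X (normal_density 0 (sqrt v))" using assms by (simp add: gaussian_def)
    have sv: "0 < sqrt v" using v False by simp
    have "integrable M X"
      by (rule distributed_integrable_var[OF d]) (auto simp: integrable_normal_moment_nz_1[OF sv])
    moreover have "expectation X = 0" by (rule normal_distributed_expectation[OF sv d])
    ultimately show ?thesis by simp
  qed
  then show "integrable M X" "expectation X = 0" by auto
qed

lemma (in prob_space) gauss_sum:
  assumes H: "indep_sets (\<lambda>i. case i of None \<Rightarrow> sets G | Some k \<Rightarrow> sets (vimage_algebra (space M) (Y k) borel))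
                (insert None (Some ` I))"
    and fin: "finite I"
    and g: "\<And>k. k \<in> I \<Longrightarrow> gaussian M (Y k) 0 ((\<sigma> k)\<^sup>2)"
  shows "AE \<omega> in M. (\<Sum>k\<in>I. Y k \<omega>) = (\<Sum>k\<in>{k\<in>I. \<sigma> k \<noteq> 0}. Y k \<omega>)"
    and "0 < sqrt (\<Sum>k\<in>I. (\<sigma> k)\<^sup>2) \<Longrightarrow> distributed M lborel (\<lambda>\<omega>. \<Sum>k\<in>{k\<in>I. \<sigma> k \<noteq> 0}. Y k \<omega>)
            (normal_density 0 (sqrt (\<Sum>k\<in>I. (\<sigma> k)\<^sup>2)))"
    and "sqrt (\<Sum>k\<in>I. (\<sigma> k)\<^sup>2) = 0 \<Longrightarrow> {k\<in>I. \<sigma> k \<noteq> 0} = {}"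
proof -
  define P where "P = {k\<in>I. \<sigma> k \<noteq> 0}"
  have finP: "finite P" using fin by (simp add: P_def)
  have sq: "(\<Sum>k\<in>I. (\<sigma> k)\<^sup>2) = (\<Sum>k\<in>P. (\<sigma> k)\<^sup>2)"
    by (rule sum.mono_neutral_right[OF fin]) (auto simp: P_def)
  have ae0: "\<forall>k\<in>I - P. AE \<omega> in M. Y k \<omega> = 0"
  proof
    fix k assume k: "k \<in> I - P"
    then have "gaussian M (Y k) 0 0" using g[of k] by (simp add: P_def)
    then show "AE \<omega> in M. Y k \<omega> = 0" by (rule gaussian_deg_AE)
  qed
  have "AE \<omega> in M. \<forall>k\<in>I - P. Y k \<omega> = 0"
    using ae0 fin by (subst AE_finite_all) auto
  then show "AE \<omega> in M. (\<Sum>k\<in>I. Y k \<omega>) = (\<Sum>k\<in>{k\<in>I. \<sigma> k \<noteq> 0}. Y k \<omega>)"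
  proof (rule AE_mp, intro AE_I2 impI)
    fix \<omega> assume "\<forall>k\<in>I - P. Y k \<omega> = 0"
    then show "(\<Sum>k\<in>I. Y k \<omega>) = (\<Sum>k\<in>{k\<in>I. \<sigma> k \<noteq> 0}. Y k \<omega>)"
      unfolding P_def[symmetric] by (intro sum.mono_neutral_right[OF fin]) (auto simp: P_def)
  qed
  show "sqrt (\<Sum>k\<in>I. (\<sigma> k)\<^sup>2) = 0 \<Longrightarrow> {k\<in>I. \<sigma> k \<noteq> 0} = {}"
    using fin by (auto simp: sum_nonneg_eq_0_iff)
  assume pos: "0 < sqrt (\<Sum>k\<in>I. (\<sigma> k)\<^sup>2)"
  have Pne: "P \<noteq> {}" using pos sq by auto
  have ind1: "indep_sets (\<lambda>i. case i of None \<Rightarrow> sets G | Some k \<Rightarrow> sets (vimage_algebra (space M) (Y k) borel)) (Some ` P)"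
    by (rule indep_sets_mono_index[OF _ H]) (auto simp: P_def)
  have ind2: "indep_sets (\<lambda>k. sets (vimage_algebra (space M) (Y k) borel)) P"
    using indep_sets_Some[OF ind1] by simp
  have rv: "\<And>k. k \<in> I \<Longrightarrow> Y k \<in> borel_measurable M" using g by (auto simp: gaussian_def)
  have iv: "indep_vars (\<lambda>i. borel) Y P"
    unfolding indep_vars_def
  proof
    show "\<forall>i\<in>P. random_variable borel (Y i)" using rv by (auto simp: P_def)
    show "indep_sets (\<lambda>i. sigma_sets (space M) {Y i -` A \<inter> space M |A. A \<in> sets borel}) P"
      using ind2 by (simp add: sets_vimage_algebra)
  qed
  have nd: "distributed M lborel (Y k) (normal_density 0 \<bar>\<sigma> k\<bar>)" if "k \<in> P" for k
  proof -
    have "(\<sigma> k)\<^sup>2 \<noteq> 0" using that by (simp add: P_def)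
    then have "distributed M lborel (Y k) (normal_density 0 (sqrt ((\<sigma> k)\<^sup>2)))"
      using g[of k] that by (simp add: P_def gaussian_def)
    then show ?thesis by simp
  qed
  have "distributed M lborel (\<lambda>x. \<Sum>i\<in>P. Y i x) (normal_density (\<Sum>i\<in>P. 0) (sqrt (\<Sum>i\<in>P. (\<bar>\<sigma> i\<bar>)\<^sup>2)))"
    by (rule sum_indep_normal[OF finP Pne iv]) (auto simp: P_def intro: nd)
  then show "distributed M lborel (\<lambda>\<omega>. \<Sum>k\<in>{k\<in>I. \<sigma> k \<noteq> 0}. Y k \<omega>) (normal_density 0 (sqrt (\<Sum>k\<in>I. (\<sigma> k)\<^sup>2)))"
    unfolding sq P_def[symmetric] by simp
qed

lemma law_eq_distributed:
  assumes li: "law_invariant M u" and X: "distributed M lborel X f" and Y: "distributed M lborel Y f"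
  shows "u X = u Y"
proof -
  have Xm: "X \<in> borel_measurable M" using distributed_measurable[OF X] by (simp only: measurable_lborel1)
  have Ym: "Y \<in> borel_measurable M" using distributed_measurable[OF Y] by (simp only: measurable_lborel1)
  have "distr M borel X = distr M lborel X" by (rule distr_cong[OF refl]) simp_all
  also have "\<dots> = density lborel f" by (rule distributed_distr_eq_density[OF X])
  also have "\<dots> = distr M lborel Y" by (rule distributed_distr_eq_density[OF Y, symmetric])
  also have "\<dots> = distr M borel Y" by (rule distr_cong[OF refl]) simp_all
  finally have eq: "distr M borel X = distr M borel Y" .
  show ?thesis using li Xm Ym eq unfolding law_invariant_def by blast
qed

lemma (in prob_space) std_from_normal:
  assumes d: "distributed M lborel X (normal_density 0 s)" and s: "0 < s"
  shows "distributed M lborel (\<lambda>\<omega>. X \<omega> / s) (normal_density 0 1)"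
    "distributed M lborel (\<lambda>\<omega>. - (X \<omega> / s)) (normal_density 0 1)"
proof -
  have "distributed M lborel (\<lambda>x. 0 + (1/s) * X x) (normal_density (0 + (1/s) * 0) (\<bar>1/s\<bar> * s))"
    by (rule normal_density_affine[OF d s]) (use s in simp)
  moreover have "(\<lambda>x. 0 + (1/s) * X x) = (\<lambda>\<omega>. X \<omega> / s)" by auto
  moreover have "\<bar>1/s\<bar> * s = 1" using s by simp
  ultimately show d1: "distributed M lborel (\<lambda>\<omega>. X \<omega> / s) (normal_density 0 1)" by (simp only: mult_zero_right add_0)
  have "distributed M lborel (\<lambda>x. 0 + (-1) * (X x / s)) (normal_density (0 + (-1) * 0) (\<bar>-1\<bar> * 1))"
    by (rule normal_density_affine[OF d1]) simp_all
  moreover have "(\<lambda>x. 0 + (-1) * (X x / s)) = (\<lambda>\<omega>. - (X \<omega> / s))" by auto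
  moreover have "(0::real) + (-1) * 0 = 0" "\<bar>-1::real\<bar> * 1 = 1" by simp_all
  ultimately show "distributed M lborel (\<lambda>\<omega>. - (X \<omega> / s)) (normal_density 0 1)" by (simp only:)
qed

theorem theorem3p9:
  fixes M :: "'a measure"
    and u :: "('a \<Rightarrow> real) \<Rightarrow> ereal"
    and F :: "'a \<Rightarrow> real ^ 'm"
    and B :: "nat \<Rightarrow> nat \<Rightarrow> real ^ 'm"   \<comment> \<open>B n k = k-th row of B_n, entries B n k $ m\<close>
    and \<xi> :: "nat \<Rightarrow> nat \<Rightarrow> 'a \<Rightarrow> real"
    and \<sigma> :: "nat \<Rightarrow> nat \<Rightarrow> real"
    and a :: "nat \<Rightarrow> real"
    and b :: "real ^ 'm"
  assumes "prob_space M"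
    and "coherent_utility M u"
    and "law_invariant M u"
    and "finite_on_gaussians M u"
    and "F \<in> borel_measurable M"
    and "\<And>m. (\<lambda>\<omega>. F \<omega> $ m) \<in> L1w M u"
    and "\<And>c. c \<noteq> 0 \<Longrightarrow> u (\<lambda>\<omega>. c \<bullet> F \<omega>) < 0"
    and "\<And>n k. k \<in> {1..n} \<Longrightarrow> gaussian M (\<xi> n k) 0 ((\<sigma> n k)\<^sup>2)"
    and "\<And>n. prob_space.indep_sets M
                (\<lambda>i. case i of None \<Rightarrow> sets (vimage_algebra (space M) F borel)
                         | Some k \<Rightarrow> sets (vimage_algebra (space M) (\<xi> n k) borel))
                (insert None (Some ` {1..n}))"
    and "filterlim a at_top sequentially"
    and "b \<noteq> 0"
    and "\<And>m. (\<lambda>n. (\<Sum>k=1..n. B n k $ m) / a n) \<longlonglongrightarrow> b $ m"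
    and "(\<lambda>n. (\<Sum>k=1..n. (\<sigma> n k)\<^sup>2) / (a n)\<^sup>2) \<longlonglongrightarrow> 0"
  shows "(\<lambda>n. factor_utility M u F (\<lambda>\<omega>. \<Sum>k=1..n. B n k \<bullet> F \<omega> + \<xi> n k \<omega>)
              / u (\<lambda>\<omega>. \<Sum>k=1..n. B n k \<bullet> F \<omega> + \<xi> n k \<omega>))
           \<longlonglongrightarrow> (1::ereal)"
proof -
  interpret P: prob_space M by (rule assms(1))
  define Dd where "Dd = determining_set M u"
  have Dne: "Dd \<noteq> {}" and Dsub: "Dd \<subseteq> dens M"
    and uI: "\<And>X. X \<in> borel_measurable M \<Longrightarrow> u X = (INF Z\<in>Dd. EQ M Z X)"
    using det_set_props[OF assms(2)] unfolding Dd_def by auto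
  have Fm: "F \<in> borel_measurable M" by (rule assms(5))
  have FmL: "(\<lambda>\<omega>. F \<omega> $ m) \<in> borel_measurable M" "u (\<lambda>\<omega>. F \<omega> $ m) \<noteq> -\<infinity>"
      "u (\<lambda>\<omega>. - F \<omega> $ m) \<noteq> -\<infinity>" for m
    using assms(6)[of m] unfolding L1w_def by auto
  have ZDm: "Z \<in> borel_measurable M" "AE \<omega> in M. 0 \<le> Z \<omega>" "integrable M Z" if "Z \<in> Dd" for Z
    using Dsub that dens_AE_nonneg[of Z M] by (auto simp: dens_def)
  define e where "e Z m = (\<integral>\<omega>. Z \<omega> * F \<omega> $ m \<partial>M)" for Z m
  have eint: "integrable M (\<lambda>\<omega>. Z \<omega> * F \<omega> $ m)" if "Z \<in> Dd" for Z m
    using L1w_bounds(1)[OF FmL(1)[of m] FmL(2)[of m] FmL(3)[of m]] that unfolding Dd_def by blast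
  have elo: "u (\<lambda>\<omega>. F \<omega> $ m) \<le> ereal (e Z m)" if "Z \<in> Dd" for Z m
    using L1w_bounds(2)[OF FmL(1)[of m] FmL(2)[of m] FmL(3)[of m]] that unfolding Dd_def e_def by blast
  have ehi: "u (\<lambda>\<omega>. - F \<omega> $ m) \<le> ereal (- e Z m)" if "Z \<in> Dd" for Z m
    using L1w_bounds(3)[OF FmL(1)[of m] FmL(2)[of m] FmL(3)[of m]] that unfolding Dd_def e_def by blast
  obtain Z0 where Z0: "Z0 \<in> Dd" using Dne by auto
  define L where "L m = \<bar>real_of_ereal (u (\<lambda>\<omega>. F \<omega> $ m))\<bar> + \<bar>real_of_ereal (u (\<lambda>\<omega>. - F \<omega> $ m))\<bar>" for m
  have eb: "\<bar>e Z m\<bar> \<le> L m" if Z: "Z \<in> Dd" for Z m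
  proof -
    obtain r1 where r1: "u (\<lambda>\<omega>. F \<omega> $ m) = ereal r1"
      using FmL(2)[of m] elo[OF Z0, of m] by (cases "u (\<lambda>\<omega>. F \<omega> $ m)") auto
    obtain r2 where r2: "u (\<lambda>\<omega>. - F \<omega> $ m) = ereal r2"
      using FmL(3)[of m] ehi[OF Z0, of m] by (cases "u (\<lambda>\<omega>. - F \<omega> $ m)") auto
    have "r1 \<le> e Z m" using elo[OF Z, of m] r1 by simp
    moreover have "r2 \<le> - e Z m" using ehi[OF Z, of m] r2 by simp
    ultimately show ?thesis unfolding L_def r1 r2 by simp
  qed
  have vF: "v \<bullet> F \<omega> = (\<Sum>m\<in>UNIV. v $ m * F \<omega> $ m)" for v \<omega> by (simp add: inner_vec_def)
  have vFm: "(\<lambda>\<omega>. v \<bullet> F \<omega>) \<in> borel_measurable M" for v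
    by (rule borel_measurable_inner[OF borel_measurable_const Fm])
  have lin_eq: "(\<lambda>\<omega>. Z \<omega> * (v \<bullet> F \<omega>)) = (\<lambda>\<omega>. \<Sum>m\<in>UNIV. v $ m * (Z \<omega> * F \<omega> $ m))" for Z v
  proof
    fix \<omega>
    have "Z \<omega> * (v \<bullet> F \<omega>) = (\<Sum>m\<in>UNIV. Z \<omega> * (v $ m * F \<omega> $ m))" unfolding vF by (rule sum_distrib_left)
    also have "\<dots> = (\<Sum>m\<in>UNIV. v $ m * (Z \<omega> * F \<omega> $ m))" by (rule sum.cong) (simp_all add: mult.left_commute)
    finally show "Z \<omega> * (v \<bullet> F \<omega>) = (\<Sum>m\<in>UNIV. v $ m * (Z \<omega> * F \<omega> $ m))" .
  qed
  have lin: "integrable M (\<lambda>\<omega>. Z \<omega> * (v \<bullet> F \<omega>))"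
      "(\<integral>\<omega>. Z \<omega> * (v \<bullet> F \<omega>) \<partial>M) = (\<Sum>m\<in>UNIV. v $ m * e Z m)" if Z: "Z \<in> Dd" for Z v
  proof -
    show "integrable M (\<lambda>\<omega>. Z \<omega> * (v \<bullet> F \<omega>))"
      unfolding lin_eq by (intro Bochner_Integration.integrable_sum integrable_mult_right eint[OF Z])
    have "(\<integral>\<omega>. Z \<omega> * (v \<bullet> F \<omega>) \<partial>M) = (\<Sum>m\<in>UNIV. (\<integral>\<omega>. v $ m * (Z \<omega> * F \<omega> $ m) \<partial>M))"
      unfolding lin_eq by (rule Bochner_Integration.integral_sum) (intro integrable_mult_right eint[OF Z])
    also have "\<dots> = (\<Sum>m\<in>UNIV. v $ m * e Z m)"
      unfolding e_def by (rule sum.cong) simp_all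
    finally show "(\<integral>\<omega>. Z \<omega> * (v \<bullet> F \<omega>) \<partial>M) = (\<Sum>m\<in>UNIV. v $ m * e Z m)" .
  qed
  have uvF: "u (\<lambda>\<omega>. v \<bullet> F \<omega>) = (INF Z\<in>Dd. ereal (\<Sum>m\<in>UNIV. v $ m * e Z m))" for v
  proof -
    have "u (\<lambda>\<omega>. v \<bullet> F \<omega>) = (INF Z\<in>Dd. EQ M Z (\<lambda>\<omega>. v \<bullet> F \<omega>))" by (rule uI[OF vFm])
    also have "\<dots> = (INF Z\<in>Dd. ereal (\<Sum>m\<in>UNIV. v $ m * e Z m))"
    proof (rule INF_cong[OF refl])
      fix Z assume Z: "Z \<in> Dd"
      show "EQ M Z (\<lambda>\<omega>. v \<bullet> F \<omega>) = ereal (\<Sum>m\<in>UNIV. v $ m * e Z m)"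
        using EQ_eq_integral[OF ZDm(1)[OF Z] ZDm(2)[OF Z] vFm lin(1)[OF Z]] lin(2)[OF Z] by simp
    qed
    finally show ?thesis .
  qed
  define s where "s n = sqrt (\<Sum>k=1..n. (\<sigma> n k)\<^sup>2)" for n
  define \<eta> where "\<eta> n \<omega> = (\<Sum>k=1..n. \<xi> n k \<omega>)" for n \<omega>
  define \<eta>' where "\<eta>' n \<omega> = (\<Sum>k\<in>{k\<in>{1..n}. \<sigma> n k \<noteq> 0}. \<xi> n k \<omega>)" for n \<omega>
  have s0: "0 \<le> s n" for n unfolding s_def by (intro real_sqrt_ge_zero sum_nonneg) simp
  have \<xi>m: "\<xi> n k \<in> borel_measurable M" if "k \<in> {1..n}" for n k
    using assms(8)[OF that] by (simp add: gaussian_def)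
  have \<eta>m: "\<eta> n \<in> borel_measurable M" for n
    unfolding \<eta>_def by (intro borel_measurable_sum \<xi>m)
  have \<eta>'m: "\<eta>' n \<in> borel_measurable M" for n
    unfolding \<eta>'_def by (intro borel_measurable_sum \<xi>m) simp
  have gs_ae: "AE \<omega> in M. \<eta> n \<omega> = \<eta>' n \<omega>" for n
    using P.gauss_sum(1)[OF assms(9)[of n] finite_atLeastAtMost assms(8)] unfolding \<eta>_def \<eta>'_def by simp
  have gs_dist: "distributed M lborel (\<eta>' n) (normal_density 0 (s n))" if "0 < s n" for n
    using P.gauss_sum(2)[OF assms(9)[of n] finite_atLeastAtMost assms(8)] that
    unfolding \<eta>'_def s_def by simp
  have gs_zero: "\<eta>' n = (\<lambda>\<omega>. 0)" if "s n = 0" for n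
  proof -
    have "{k\<in>{1..n}. \<sigma> n k \<noteq> 0} = {}"
      using P.gauss_sum(3)[OF assms(9)[of n] finite_atLeastAtMost assms(8)] that
      unfolding s_def by blast
    then show ?thesis unfolding \<eta>'_def by (simp only: sum.empty)
  qed
  have gK: "\<exists>K. \<forall>n. \<forall>Z\<in>Dd. integrable M (\<lambda>\<omega>. Z \<omega> * \<eta>' n \<omega>) \<and> \<bar>\<integral>\<omega>. Z \<omega> * \<eta>' n \<omega> \<partial>M\<bar> \<le> K * s n"
  proof (cases "\<exists>n0. 0 < s n0")
    case True
    then obtain n0 where n0: "0 < s n0" by blast
    define Gs where "Gs = (\<lambda>\<omega>. \<eta>' n0 \<omega> / s n0)"
    have dG: "distributed M lborel Gs (normal_density 0 1)"
      unfolding Gs_def by (rule P.std_from_normal(1)[OF gs_dist[OF n0] n0])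
    have gG: "gaussian M Gs 0 1"
      unfolding gaussian_def using dG distributed_measurable[OF dG] by simp
    have "\<bar>u Gs\<bar> \<noteq> \<infinity>" by (rule assms(4)[unfolded finite_on_gaussians_def, rule_format, OF gG])
    then obtain \<kappa> where \<kappa>: "u Gs = ereal \<kappa>" by (cases "u Gs") auto
    show ?thesis
    proof (intro exI[of _ "- \<kappa>"] allI ballI)
      fix n Z assume Z: "Z \<in> Dd"
      show "integrable M (\<lambda>\<omega>. Z \<omega> * \<eta>' n \<omega>) \<and> \<bar>\<integral>\<omega>. Z \<omega> * \<eta>' n \<omega> \<partial>M\<bar> \<le> - \<kappa> * s n"
      proof (cases "s n = 0")
        case True
        then show ?thesis by (simp add: gs_zero[OF True])
      next
        case False
        then have sp: "0 < s n" using s0[of n] by simp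
        define Xn where "Xn = (\<lambda>\<omega>. \<eta>' n \<omega> / s n)"
        have d1: "distributed M lborel Xn (normal_density 0 1)"
          unfolding Xn_def by (rule P.std_from_normal(1)[OF gs_dist[OF sp] sp])
        have d2: "distributed M lborel (\<lambda>\<omega>. - Xn \<omega>) (normal_density 0 1)"
          unfolding Xn_def by (rule P.std_from_normal(2)[OF gs_dist[OF sp] sp])
        have u1: "u Xn = ereal \<kappa>" using law_eq_distributed[OF assms(3) d1 dG] \<kappa> by simp
        have u2: "u (\<lambda>\<omega>. - Xn \<omega>) = ereal \<kappa>" using law_eq_distributed[OF assms(3) d2 dG] \<kappa> by simp
        have Xm: "Xn \<in> borel_measurable M" using distributed_measurable[OF d1] by (simp only: measurable_lborel1)
        have ZD: "Z \<in> determining_set M u" using Z unfolding Dd_def .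
        have u1': "u Xn \<noteq> -\<infinity>" using u1 by simp
        have u2': "u (\<lambda>\<omega>. - Xn \<omega>) \<noteq> -\<infinity>" using u2 by simp
        have iX: "integrable M (\<lambda>\<omega>. Z \<omega> * Xn \<omega>)" by (rule L1w_bounds(1)[OF Xm u1' u2' ZD])
        have b1: "\<kappa> \<le> (\<integral>\<omega>. Z \<omega> * Xn \<omega> \<partial>M)" using L1w_bounds(2)[OF Xm u1' u2' ZD] u1 by simp
        have b2: "\<kappa> \<le> - (\<integral>\<omega>. Z \<omega> * Xn \<omega> \<partial>M)" using L1w_bounds(3)[OF Xm u1' u2' ZD] u2 by simp
        have eqf: "(\<lambda>\<omega>. Z \<omega> * \<eta>' n \<omega>) = (\<lambda>\<omega>. s n * (Z \<omega> * Xn \<omega>))"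
          using sp by (auto simp: Xn_def)
        have "\<bar>\<integral>\<omega>. Z \<omega> * \<eta>' n \<omega> \<partial>M\<bar> = s n * \<bar>\<integral>\<omega>. Z \<omega> * Xn \<omega> \<partial>M\<bar>"
          unfolding eqf using sp by (simp add: abs_mult)
        also have "\<dots> \<le> s n * (- \<kappa>)" using b1 b2 sp by (intro mult_left_mono) auto
        finally show ?thesis unfolding eqf using iX by (simp add: mult.commute)
      qed
    qed
  next
    case False
    have "s n = 0" for n
    proof -
      have "\<not> 0 < s n" using False by blast
      then show ?thesis using s0[of n] by linarith
    qed
    then show ?thesis by (intro exI[of _ 0]) (simp add: gs_zero)
  qed
  then obtain K where K: "\<And>n Z. Z \<in> Dd \<Longrightarrow> integrable M (\<lambda>\<omega>. Z \<omega> * \<eta>' n \<omega>)"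
      "\<And>n Z. Z \<in> Dd \<Longrightarrow> \<bar>\<integral>\<omega>. Z \<omega> * \<eta>' n \<omega> \<partial>M\<bar> \<le> K * s n" by blast
  have ae2: "AE \<omega> in M. Z \<omega> * \<eta> n \<omega> = Z \<omega> * \<eta>' n \<omega>" for Z n
    using gs_ae[of n] by eventually_elim simp
  have g\<eta>: "integrable M (\<lambda>\<omega>. Z \<omega> * \<eta> n \<omega>)" "\<bar>\<integral>\<omega>. Z \<omega> * \<eta> n \<omega> \<partial>M\<bar> \<le> K * s n" if Z: "Z \<in> Dd" for Z n
  proof -
    have m1: "(\<lambda>\<omega>. Z \<omega> * \<eta> n \<omega>) \<in> borel_measurable M" using ZDm(1)[OF Z] \<eta>m[of n] by measurable
    have m2: "(\<lambda>\<omega>. Z \<omega> * \<eta>' n \<omega>) \<in> borel_measurable M" using ZDm(1)[OF Z] \<eta>'m[of n] by measurable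
    show "integrable M (\<lambda>\<omega>. Z \<omega> * \<eta> n \<omega>)"
      using integrable_cong_AE[OF m1 m2 ae2] K(1)[OF Z] by simp
    show "\<bar>\<integral>\<omega>. Z \<omega> * \<eta> n \<omega> \<partial>M\<bar> \<le> K * s n"
      using integral_cong_AE[OF m1 m2 ae2] K(2)[OF Z] by simp
  qed
  define g where "g Z n = (\<integral>\<omega>. Z \<omega> * \<eta> n \<omega> \<partial>M)" for Z n
  define c where "c n = (\<Sum>k=1..n. B n k)" for n
  have Seq: "(\<lambda>\<omega>. \<Sum>k=1..n. B n k \<bullet> F \<omega> + \<xi> n k \<omega>) = (\<lambda>\<omega>. c n \<bullet> F \<omega> + \<eta> n \<omega>)" for n
    by (rule ext) (simp add: sum.distrib inner_sum_left c_def \<eta>_def)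
  have Sm: "(\<lambda>\<omega>. c n \<bullet> F \<omega> + \<eta> n \<omega>) \<in> borel_measurable M" for n
    using vFm[of "c n"] \<eta>m[of n] by measurable
  have uS: "u (\<lambda>\<omega>. c n \<bullet> F \<omega> + \<eta> n \<omega>) = (INF Z\<in>Dd. ereal ((\<Sum>m\<in>UNIV. c n $ m * e Z m) + g Z n))" for n
  proof -
    have "u (\<lambda>\<omega>. c n \<bullet> F \<omega> + \<eta> n \<omega>) = (INF Z\<in>Dd. EQ M Z (\<lambda>\<omega>. c n \<bullet> F \<omega> + \<eta> n \<omega>))"
      by (rule uI[OF Sm])
    also have "\<dots> = (INF Z\<in>Dd. ereal ((\<Sum>m\<in>UNIV. c n $ m * e Z m) + g Z n))"
    proof (rule INF_cong[OF refl])
      fix Z assume Z: "Z \<in> Dd"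
      have eqf: "(\<lambda>\<omega>. Z \<omega> * (c n \<bullet> F \<omega> + \<eta> n \<omega>)) = (\<lambda>\<omega>. Z \<omega> * (c n \<bullet> F \<omega>) + Z \<omega> * \<eta> n \<omega>)"
        by (simp add: distrib_left)
      have int: "integrable M (\<lambda>\<omega>. Z \<omega> * (c n \<bullet> F \<omega> + \<eta> n \<omega>))"
        unfolding eqf by (intro Bochner_Integration.integrable_add lin(1)[OF Z] g\<eta>(1)[OF Z])
      have "(\<integral>\<omega>. Z \<omega> * (c n \<bullet> F \<omega> + \<eta> n \<omega>) \<partial>M) = (\<Sum>m\<in>UNIV. c n $ m * e Z m) + g Z n"
        unfolding eqf g_def lin(2)[OF Z, symmetric]
        by (rule Bochner_Integration.integral_add[OF lin(1)[OF Z] g\<eta>(1)[OF Z]])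
      then show "EQ M Z (\<lambda>\<omega>. c n \<bullet> F \<omega> + \<eta> n \<omega>) = ereal ((\<Sum>m\<in>UNIV. c n $ m * e Z m) + g Z n)"
        using EQ_eq_integral[OF ZDm(1)[OF Z] ZDm(2)[OF Z] Sm int] by simp
    qed
    finally show ?thesis .
  qed
  define G where "G = vimage_algebra (space M) F borel"
  have FG: "F \<in> measurable G borel" unfolding G_def by (rule measurable_vimage_algebra1) simp
  have spG: "space G = space M" by (simp add: G_def)
  have subalg: "subalgebra M G"
  proof -
    have "sets G = {F -` A \<inter> space M | A. A \<in> sets borel}"
      unfolding G_def by (rule sets_vimage_algebra2) simp
    also have "\<dots> \<subseteq> sets M" using Fm by (auto intro: measurable_sets)
    finally show ?thesis unfolding subalgebra_def using spG by simp
  qed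
  interpret CE: finite_measure_subalgebra M G
    by (rule finite_measure_subalgebra.intro[OF P.finite_measure_axioms])
       (simp add: finite_measure_subalgebra_axioms_def subalg)
  define ce where "ce Z = real_cond_exp M G Z" for Z
  have cem: "ce Z \<in> borel_measurable G" "ce Z \<in> borel_measurable M" for Z
    unfolding ce_def by (rule borel_measurable_cond_exp, rule borel_measurable_cond_exp2)
  have vFG: "(\<lambda>\<omega>. v \<bullet> F \<omega>) \<in> borel_measurable G" for v
    by (rule borel_measurable_inner[OF borel_measurable_const FG])
  have ceF: "integrable M (\<lambda>\<omega>. ce Z \<omega> * (v \<bullet> F \<omega>))"
      "(\<integral>\<omega>. ce Z \<omega> * (v \<bullet> F \<omega>) \<partial>M) = (\<Sum>m\<in>UNIV. v $ m * e Z m)" if Z: "Z \<in> Dd" for Z v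
  proof -
    have i1: "integrable M (\<lambda>\<omega>. (v \<bullet> F \<omega>) * Z \<omega>)" using lin(1)[OF Z, of v] by (simp add: mult.commute)
    have r1: "integrable M (\<lambda>\<omega>. (v \<bullet> F \<omega>) * real_cond_exp M G Z \<omega>)"
      by (rule CE.real_cond_exp_intg(1)[OF i1 vFG ZDm(1)[OF Z]])
    have r2: "(\<integral>\<omega>. (v \<bullet> F \<omega>) * real_cond_exp M G Z \<omega> \<partial>M) = (\<integral>\<omega>. (v \<bullet> F \<omega>) * Z \<omega> \<partial>M)"
      by (rule CE.real_cond_exp_intg(2)[OF i1 vFG ZDm(1)[OF Z]])
    show "integrable M (\<lambda>\<omega>. ce Z \<omega> * (v \<bullet> F \<omega>))" using r1 by (simp add: ce_def mult.commute)
    show "(\<integral>\<omega>. ce Z \<omega> * (v \<bullet> F \<omega>) \<partial>M) = (\<Sum>m\<in>UNIV. v $ m * e Z m)"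
      using r2 lin(2)[OF Z, of v] by (simp add: ce_def mult.commute)
  qed
  have ce\<xi>: "integrable M (\<lambda>\<omega>. ce Z \<omega> * \<xi> n k \<omega>) \<and> (\<integral>\<omega>. ce Z \<omega> * \<xi> n k \<omega> \<partial>M) = 0"
    if Z: "Z \<in> Dd" and k: "k \<in> {1..n}" for Z n k
  proof -
    have ind: "P.indep_var borel (ce Z) borel (\<xi> n k)"
      by (rule P.indep_var_from_family[OF assms(9)[of n] k, folded G_def, OF cem(1) cem(2) \<xi>m[OF k] spG])
    have i1: "integrable M (ce Z)" unfolding ce_def by (rule CE.real_cond_exp_int(1)[OF ZDm(3)[OF Z]])
    have i2: "integrable M (\<xi> n k)" by (rule P.gaussian_int(1)[OF assms(8)[OF k]])
    have e2: "(\<integral>\<omega>. \<xi> n k \<omega> \<partial>M) = 0" by (rule P.gaussian_int(2)[OF assms(8)[OF k]])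
    show ?thesis
      using P.indep_var_integrable[OF ind i1 i2] P.indep_var_lebesgue_integral[OF ind i1 i2] e2 by simp
  qed
  have ce\<eta>: "integrable M (\<lambda>\<omega>. ce Z \<omega> * \<eta> n \<omega>)" "(\<integral>\<omega>. ce Z \<omega> * \<eta> n \<omega> \<partial>M) = 0"
    if Z: "Z \<in> Dd" for Z n
  proof -
    have eqf: "(\<lambda>\<omega>. ce Z \<omega> * \<eta> n \<omega>) = (\<lambda>\<omega>. \<Sum>k\<in>{1..n}. ce Z \<omega> * \<xi> n k \<omega>)"
      unfolding \<eta>_def by (simp add: sum_distrib_left)
    show "integrable M (\<lambda>\<omega>. ce Z \<omega> * \<eta> n \<omega>)"
      unfolding eqf by (rule Bochner_Integration.integrable_sum) (use ce\<xi>[OF Z] in blast)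
    have "(\<integral>\<omega>. ce Z \<omega> * \<eta> n \<omega> \<partial>M) = (\<Sum>k\<in>{1..n}. (\<integral>\<omega>. ce Z \<omega> * \<xi> n k \<omega> \<partial>M))"
      unfolding eqf by (rule Bochner_Integration.integral_sum) (use ce\<xi>[OF Z] in blast)
    also have "\<dots> = 0" using ce\<xi>[OF Z] by simp
    finally show "(\<integral>\<omega>. ce Z \<omega> * \<eta> n \<omega> \<partial>M) = 0" .
  qed
  have uf: "factor_utility M u F (\<lambda>\<omega>. c n \<bullet> F \<omega> + \<eta> n \<omega>) = (INF Z\<in>Dd. ereal (\<Sum>m\<in>UNIV. c n $ m * e Z m))" for n
  proof -
    have "factor_utility M u F (\<lambda>\<omega>. c n \<bullet> F \<omega> + \<eta> n \<omega>) = (INF Z\<in>Dd. EQ M (ce Z) (\<lambda>\<omega>. c n \<bullet> F \<omega> + \<eta> n \<omega>))"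
      unfolding factor_utility_def G_def[symmetric] Dd_def[symmetric] ce_def by (simp add: image_comp)
    also have "\<dots> = (INF Z\<in>Dd. ereal (\<Sum>m\<in>UNIV. c n $ m * e Z m))"
    proof (rule INF_cong[OF refl])
      fix Z assume Z: "Z \<in> Dd"
      have eqf: "(\<lambda>\<omega>. ce Z \<omega> * (c n \<bullet> F \<omega> + \<eta> n \<omega>)) = (\<lambda>\<omega>. ce Z \<omega> * (c n \<bullet> F \<omega>) + ce Z \<omega> * \<eta> n \<omega>)"
        by (simp add: distrib_left)
      have int: "integrable M (\<lambda>\<omega>. ce Z \<omega> * (c n \<bullet> F \<omega> + \<eta> n \<omega>))"
        unfolding eqf by (intro Bochner_Integration.integrable_add ceF(1)[OF Z] ce\<eta>(1)[OF Z])
      have "(\<integral>\<omega>. ce Z \<omega> * (c n \<bullet> F \<omega> + \<eta> n \<omega>) \<partial>M) = (\<Sum>m\<in>UNIV. c n $ m * e Z m)"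
        unfolding eqf Bochner_Integration.integral_add[OF ceF(1)[OF Z] ce\<eta>(1)[OF Z]] ceF(2)[OF Z] ce\<eta>(2)[OF Z]
        by simp
      moreover have "AE \<omega> in M. 0 \<le> ce Z \<omega>"
        unfolding ce_def by (rule CE.real_cond_exp_pos[OF ZDm(2)[OF Z] ZDm(1)[OF Z]])
      ultimately show "EQ M (ce Z) (\<lambda>\<omega>. c n \<bullet> F \<omega> + \<eta> n \<omega>) = ereal (\<Sum>m\<in>UNIV. c n $ m * e Z m)"
        using EQ_eq_integral[OF cem(2) _ Sm int] by simp
    qed
    finally show ?thesis .
  qed
  have neg: "(INF Z\<in>Dd. ereal (\<Sum>m\<in>UNIV. b $ m * e Z m)) < 0"
    using assms(7)[OF assms(11)] uvF[of b] by simp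
  have cl: "(\<lambda>n. c n $ m / a n) \<longlonglongrightarrow> b $ m" for m
    using assms(12)[of m] by (simp add: c_def)
  have apos: "eventually (\<lambda>n. 0 < a n) sequentially"
    using assms(10) by (simp add: filterlim_at_top_dense)
  have sl: "(\<lambda>n. s n / a n) \<longlonglongrightarrow> 0"
  proof -
    have l1: "(\<lambda>n. sqrt ((\<Sum>k=1..n. (\<sigma> n k)\<^sup>2) / (a n)\<^sup>2)) \<longlonglongrightarrow> sqrt 0"
      by (intro tendsto_real_sqrt assms(13))
    have "eventually (\<lambda>n. sqrt ((\<Sum>k=1..n. (\<sigma> n k)\<^sup>2) / (a n)\<^sup>2) = s n / a n) sequentially"
      using apos
    proof eventually_elim
      case (elim n)
      have "sqrt ((\<Sum>k=1..n. (\<sigma> n k)\<^sup>2) / (a n)\<^sup>2) = s n / sqrt ((a n)\<^sup>2)"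
        unfolding s_def by (rule real_sqrt_divide)
      also have "\<dots> = s n / a n" using elim by simp
      finally show ?case .
    qed
    with l1 show ?thesis by (simp add: tendsto_cong)
  qed
  have gb: "\<bar>g Z n\<bar> \<le> K * s n" if "Z \<in> Dd" for Z n
    unfolding g_def by (rule g\<eta>(2)[OF that])
  show ?thesis
    unfolding Seq uf uS by (rule analytic_part[OF Dne eb gb neg assms(10) cl sl])
qed

end
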